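(* For every odd integer $n\geq 3$ and every $i\in[1,7]$, there exists a $D_i$-decomposition of $K^*_{n\times 7}$.
   Context: For a simple graph $G$, $G^*$ is the digraph with vertex set $V(G)$ and arc set $\bigcup_{\{x,y\}\in E(G)}\{(x,y),(y,x)\}$. $K_{n\times 7}$ is the complete multipartite simple graph with $n$ parts each of size $7$, and $K^*_{n\times 7}=(K_{n\times 7})^*$. A $D$-decomposition of a digraph $K$ is a set of subdigraphs of $K$, each isomorphic to $D$, such that every arc of $K$ lies in exactly one of them. For distinct vertices $v_0,\dots,v_6$, the digraphs $D_i[v_0,v_1,\dots,v_6]$ ($i\in[1,7]$) all have vertex set $\{v_0,\dots,v_6\}$ and the following arc sets: $D_1$: $(v_1,v_0),(v_1,v_2),(v_2,v_3),(v_3,v_4),(v_4,v_5),(v_5,v_6),(v_6,v_0)$; $D_2$: $(v_1,v_0),(v_2,v_1),(v_2,v_3),(v_3,v_4),(v_4,v_5),(v_5,v_6),(v_6,v_0)$; $D_3$: $(v_1,v_0),(v_1,v_2),(v_3,v_2),(v_3,v_4),(v_4,v_5),(v_5,v_6),(v_6,v_0)$; $D_4$: $(v_1,v_0),(v_1,v_2),(v_2,v_3),(v_4,v_3),(v_4,v_5),(v_5,v_6),(v_6,v_0)$; $D_5$: $(v_1,v_0),(v_2,v_1),(v_3,v_2),(v_3,v_4),(v_4,v_5),(v_5,v_6),(v_6,v_0)$; $D_6$: $(v_1,v_0),(v_2,v_1),(v_2,v_3),(v_3,v_4),(v_5,v_4),(v_5,v_6),(v_6,v_0)$; $D_7$: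 $(v_1,v_0),(v_1,v_2),(v_3,v_2),(v_3,v_4),(v_4,v_5),(v_6,v_5),(v_6,v_0)$. $D_i$ also denotes the isomorphism type of $D_i[v_0,\dots,v_6]$. *)

theory Defs
  imports Main
begin

type_synonym 'a sgraph = "'a set \<times> 'a set set"
type_synonym 'a digraph = "'a set \<times> ('a \<times> 'a) set"

definition dstar :: "'a sgraph \<Rightarrow> 'a digraph" where
  "dstar G = (fst G, \<Union>e\<in>snd G. {(x,y). e = {x,y} \<and> x \<noteq> y})"

definition K_multi7 :: "nat \<Rightarrow> (nat \<times> nat) sgraph" where
  "K_multi7 n = ({0..<n} \<times> {0..<7},
     {{x,y} | x y. x \<in> {0..<n} \<times> {0..<7} \<and> y \<in> {0..<n} \<times> {0..<7} \<and> fst x \<noteq> fst y})"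

definition Kstar_multi7 :: "nat \<Rightarrow> (nat \<times> nat) digraph" where
  "Kstar_multi7 n = dstar (K_multi7 n)"

definition subdigraph :: "'a digraph \<Rightarrow> 'a digraph \<Rightarrow> bool" where
  "subdigraph H K \<longleftrightarrow> fst H \<subseteq> fst K \<and> snd H \<subseteq> snd K \<and> snd H \<subseteq> fst H \<times> fst H"

definition digraph_iso :: "'a digraph \<Rightarrow> 'b digraph \<Rightarrow> bool" where
  "digraph_iso G H \<longleftrightarrow> (\<exists>f. bij_betw f (fst G) (fst H) \<and>
      snd H = (\<lambda>(x,y). (f x, f y)) ` snd G \<and> snd G \<subseteq> fst G \<times> fst G)"

definition is_decomposition :: "'b digraph \<Rightarrow> 'a digraph \<Rightarrow> 'a digraph set \<Rightarrow> bool" where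
  "is_decomposition D K S \<longleftrightarrow>
     (\<forall>H\<in>S. subdigraph H K \<and> digraph_iso D H) \<and>
     (\<forall>a\<in>snd K. \<exists>!H. H \<in> S \<and> a \<in> snd H)"

text \<open>Arcs of D_i[v0,...,v6], as pairs of indices (j,k) meaning the arc (v_j,v_k).\<close>
fun D_arcs :: "nat \<Rightarrow> (nat \<times> nat) list" where
  "D_arcs (Suc 0) = [(1,0),(1,2),(2,3),(3,4),(4,5),(5,6),(6,0)]"
| "D_arcs (Suc (Suc 0)) = [(1,0),(2,1),(2,3),(3,4),(4,5),(5,6),(6,0)]"
| "D_arcs (Suc (Suc (Suc 0))) = [(1,0),(1,2),(3,2),(3,4),(4,5),(5,6),(6,0)]"
| "D_arcs (Suc (Suc (Suc (Suc 0)))) = [(1,0),(1,2),(2,3),(4,3),(4,5),(5,6),(6,0)]"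
| "D_arcs (Suc (Suc (Suc (Suc (Suc 0))))) = [(1,0),(2,1),(3,2),(3,4),(4,5),(5,6),(6,0)]"
| "D_arcs (Suc (Suc (Suc (Suc (Suc (Suc 0)))))) = [(1,0),(2,1),(2,3),(3,4),(5,4),(5,6),(6,0)]"
| "D_arcs (Suc (Suc (Suc (Suc (Suc (Suc (Suc 0))))))) = [(1,0),(1,2),(3,2),(3,4),(4,5),(6,5),(6,0)]"
| "D_arcs _ = []"

definition D_on :: "nat \<Rightarrow> 'a list \<Rightarrow> 'a digraph" where
  "D_on i vs = (set vs, (\<lambda>(j,k). (vs ! j, vs ! k)) ` set (D_arcs i))"

definition D_type :: "nat \<Rightarrow> nat digraph" where
  "D_type i = D_on i [0..<7]"

end

theory Submission imports Defs "HOL-Number_Theory.Cong" begin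

lemma coefc_coprime:
  fixes c :: int and n :: nat
  assumes "odd n" "c \<in> {1,-1,2,-2}"
  shows "coprime c (int n)"
  using assms by auto

lemma coefc_cancel:
  fixes c a b :: int and n :: nat
  assumes "odd n" "c \<in> {1,-1,2,-2}" "int n dvd c*a - c*b"
  shows "int n dvd a - b"
proof -
  have "[c * a = c * b] (mod int n)" using assms(3) by (simp add: cong_def mod_eq_dvd_iff)
  then have "[a = b] (mod int n)"
    using cong_mult_lcancel[OF coefc_coprime[OF assms(1,2)]] by blast
  then show ?thesis by (simp add: cong_def mod_eq_dvd_iff)
qed

lemma coefc_surj:
  fixes c x :: int and n :: nat
  assumes "odd n" "c \<in> {1,-1,2,-2}"
  shows "\<exists>d<n. int n dvd c * int d - x"
proof -
  obtain y where y: "[c * y = 1] (mod int n)"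
    using cong_solve_coprime_int coefc_coprime[OF assms] by blast
  have n0: "n > 0" using assms(1) by (cases n) auto
  define d where "d = nat ((y*x) mod int n)"
  have dd: "int d = (y*x) mod int n" using n0 by (simp add: d_def)
  have "(y*x) mod int n < int n" using n0 by simp
  then have "d < n" using dd by linarith
  moreover have "int n dvd c * int d - x"
  proof -
    have "int n dvd c * int d - c * (y * x)"
      by (metis dd dvd_mult mod_mod_trivial mod_eq_dvd_iff right_diff_distrib)
    moreover have "int n dvd (c*y) * x - 1 * x"
    proof -
      have "int n dvd c*y - 1" using y by (simp add: cong_def mod_eq_dvd_iff)
      then have "int n dvd (c*y - 1) * x" by (rule dvd_mult2)
      then show ?thesis by (simp add: algebra_simps)
    qed
    ultimately have "int n dvd (c * int d - c * (y * x)) + ((c*y) * x - 1 * x)"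
      by (rule dvd_add)
    then show ?thesis by (simp add: algebra_simps)
  qed
  ultimately show ?thesis by blast
qed

lemma Kstar_fst: "fst (Kstar_multi7 n) = {0..<n} \<times> {0..<7}"
  by (simp add: Kstar_multi7_def dstar_def K_multi7_def)

lemma Kstar_snd: "(x,y) \<in> snd (Kstar_multi7 n) \<longleftrightarrow>
   x \<in> {0..<n} \<times> {0..<7} \<and> y \<in> {0..<n} \<times> {0..<7} \<and> fst x \<noteq> fst y"
  unfolding Kstar_multi7_def dstar_def K_multi7_def
  apply (auto simp: doubleton_eq_iff)
  apply blast
  done

lemma iso_D_on:
  assumes "distinct vs" "length vs = 7" "\<forall>(j,l)\<in>set (D_arcs i). j<7 \<and> l<7"
  shows "digraph_iso (D_type i) (D_on i vs)"
  unfolding digraph_iso_def D_type_def D_on_def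
proof (intro exI[of _ "\<lambda>j. vs!j"] conjI)
  show "bij_betw (\<lambda>j. vs!j) (fst (set [0..<7], (\<lambda>(j, k). ([0..<7] ! j, [0..<7] ! k)) ` set (D_arcs i)))
     (fst (set vs, (\<lambda>(j, k). (vs ! j, vs ! k)) ` set (D_arcs i)))"
    using bij_betw_nth[OF assms(1)] assms(2) by (auto simp: lessThan_atLeast0)
  show "snd (set vs, (\<lambda>(j, k). (vs ! j, vs ! k)) ` set (D_arcs i)) =
    (\<lambda>(x, y). (vs ! x, vs ! y)) ` snd (set [0..<7], (\<lambda>(j, k). ([0..<7] ! j, [0..<7] ! k)) ` set (D_arcs i))"
    using assms(3) by (force simp: image_image intro!: image_cong)
  show "snd (set [0..<7], (\<lambda>(j, k). ([0..<7] ! j, [0..<7] ! k)) ` set (D_arcs i))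
    \<subseteq> fst (set [0..<7], (\<lambda>(j, k). ([0..<7] ! j, [0..<7] ! k)) ` set (D_arcs i)) \<times>
       fst (set [0..<7], (\<lambda>(j, k). ([0..<7] ! j, [0..<7] ! k)) ` set (D_arcs i))"
    using assms(3) by auto
qed


definition vtx :: "nat \<Rightarrow> nat list \<Rightarrow> nat list \<Rightarrow> nat \<Rightarrow> nat \<Rightarrow> nat \<Rightarrow> nat \<Rightarrow> nat \<times> nat" where
  "vtx n ks as d g1 g2 j = ((ks!j * d + g1) mod n, (as!j + g2) mod 7)"

definition blk :: "nat \<Rightarrow> nat \<Rightarrow> nat list \<Rightarrow> nat list \<Rightarrow> nat \<Rightarrow> nat \<Rightarrow> nat \<Rightarrow> (nat\<times>nat) digraph" where
  "blk i n ks as d g1 g2 = D_on i (map (vtx n ks as d g1 g2) [0..<7])"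

lemma blk_fst: "fst (blk i n ks as d g1 g2) = vtx n ks as d g1 g2 ` {0..<7}"
  by (simp add: blk_def D_on_def)

lemma blk_snd:
  assumes "\<forall>(j,l)\<in>set (D_arcs i). j<7 \<and> l<7"
  shows "(x,y) \<in> snd (blk i n ks as d g1 g2) \<longleftrightarrow>
    (\<exists>j l. (j,l) \<in> set (D_arcs i) \<and> x = vtx n ks as d g1 g2 j \<and> y = vtx n ks as d g1 g2 l)"
  using assms by (force simp: blk_def D_on_def)

lemma dvd_lt_eq:
  fixes a b m :: nat
  assumes "int m dvd int a - int b" "a < m" "b < m"
  shows "a = b"
proof -
  have "int a mod int m = int b mod int m" using assms(1) by (simp add: mod_eq_dvd_iff)
  then show ?thesis using assms(2,3) by simp
qed

lemma dvd_comb: "(m::int) dvd a \<Longrightarrow> m dvd b \<Longrightarrow> a - b = c \<Longrightarrow> m dvd c"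
  using dvd_diff by blast

lemma dvd_mod_nat: "int m dvd int (x mod m) - int x"
proof -
  have "int (x mod m) = int x mod int m" by (simp add: of_nat_mod)
  then show ?thesis by (metis dvd_minus_mod dvd_minus_iff minus_diff_eq)
qed

lemma fst_ne:
  assumes odd: "odd n" and d: "0<d" "d<n" and c: "int a - int b \<in> {1,-1,2,-2}"
  shows "(a*d+g) mod n \<noteq> (b*d+g) mod n"
proof
  assume eq: "(a*d+g) mod n = (b*d+g) mod n"
  obtain X where X: "X = int ((a*d+g) mod n)" by blast
  have h1: "int n dvd X - int (a*d+g)" unfolding X by (rule dvd_mod_nat)
  have h2: "int n dvd X - int (b*d+g)" unfolding X eq by (rule dvd_mod_nat)
  have "X - int (b*d+g) - (X - int (a*d+g)) = (int a - int b) * int d - (int a - int b) * int 0"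
    by (simp add: algebra_simps)
  then have "int n dvd (int a - int b) * int d - (int a - int b) * int 0"
    by (rule dvd_comb[OF h2 h1])
  then have "int n dvd int d - int 0" by (rule coefc_cancel[OF odd c])
  then have "d = 0" using dvd_lt_eq[of n d 0] d by simp
  then show False using d by simp
qed

lemma vtx_dvd1: "int n dvd (int (ks!j) * int d + int g1) - int (fst (vtx n ks as d g1 g2 j))"
proof -
  have "int n dvd int ((ks!j * d + g1) mod n) - int (ks!j * d + g1)" by (rule dvd_mod_nat)
  then show ?thesis unfolding vtx_def by (simp add: dvd_diff_commute)
qed

lemma vtx_dvd2: "int 7 dvd (int (as!j) + int g2) - int (snd (vtx n ks as d g1 g2 j))"
proof -
  have "int 7 dvd int ((as!j + g2) mod 7) - int (as!j + g2)" by (rule dvd_mod_nat)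
  then show ?thesis unfolding vtx_def by (simp add: dvd_diff_commute)
qed


lemma blk_unique:
  assumes odd: "odd n"
  and idx: "\<forall>(j,l)\<in>set (D_arcs i). j<7 \<and> l<7"
  and coef: "\<forall>(j,l)\<in>set (D_arcs i). int(ks!l) - int(ks!j) \<in> {1,-1,2,-2}"
  and inj: "inj_on (\<lambda>(j,l). (int(as!l) - int(as!j)) mod 7) (set (D_arcs i))"
  and p: "d<n" "g1<n" "g2<7" "d'<n" "g1'<n" "g2'<7"
  and a1: "(x,y) \<in> snd (blk i n ks as d g1 g2)"
  and a2: "(x,y) \<in> snd (blk i n ks as d' g1' g2')"
  shows "blk i n ks as d g1 g2 = blk i n ks as d' g1' g2'"
proof -
  obtain j l where jl: "(j,l) \<in> set (D_arcs i)" "x = vtx n ks as d g1 g2 j" "y = vtx n ks as d g1 g2 l"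
    using a1 blk_snd[OF idx] by blast
  obtain j' l' where jl': "(j',l') \<in> set (D_arcs i)" "x = vtx n ks as d' g1' g2' j'" "y = vtx n ks as d' g1' g2' l'"
    using a2 blk_snd[OF idx] by blast
  have e1: "int 7 dvd (int(as!l) - int(as!j)) - (int (snd y) - int (snd x))"
    by (rule dvd_comb[OF vtx_dvd2[of as l g2 n ks d g1] vtx_dvd2[of as j g2 n ks d g1]])
       (simp add: jl algebra_simps)
  have e2: "int 7 dvd (int(as!l') - int(as!j')) - (int (snd y) - int (snd x))"
    by (rule dvd_comb[OF vtx_dvd2[of as l' g2' n ks d' g1'] vtx_dvd2[of as j' g2' n ks d' g1']])
       (simp add: jl' algebra_simps)
  have "(int(as!l) - int(as!j)) mod 7 = (int(as!l') - int(as!j')) mod 7"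
    using e1 e2 by (metis mod_eq_dvd_iff of_nat_numeral)
  then have jj: "j = j'" "l = l'" using inj jl(1) jl'(1) unfolding inj_on_def by auto
  define c where "c = int(ks!l) - int(ks!j)"
  have c: "c \<in> {1,-1,2,-2}" using coef jl(1) by (auto simp: c_def)
  have f1: "int n dvd c * int d - (int (fst y) - int (fst x))"
    by (rule dvd_comb[OF vtx_dvd1[of n ks l d g1 as g2] vtx_dvd1[of n ks j d g1 as g2]])
       (simp add: jl c_def algebra_simps)
  have f2: "int n dvd c * int d' - (int (fst y) - int (fst x))"
    by (rule dvd_comb[OF vtx_dvd1[of n ks l d' g1' as g2'] vtx_dvd1[of n ks j d' g1' as g2']])
       (simp add: jl' jj c_def algebra_simps)
  have "int n dvd c * int d - c * int d'"
    by (rule dvd_comb[OF f1 f2]) simp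
  then have "int n dvd int d - int d'" using coefc_cancel[OF odd c] by blast
  then have dd: "d = d'" using dvd_lt_eq[of n d d'] p by blast
  have xx: "vtx n ks as d g1 g2 j = vtx n ks as d' g1' g2' j" using jl(2) jl'(2) jj by simp
  have "int n dvd int g1 - int g1'"
    by (rule dvd_comb[OF vtx_dvd1[of n ks j d g1 as g2] vtx_dvd1[of n ks j d' g1' as g2']])
       (simp add: xx dd[symmetric] algebra_simps)
  then have gg1: "g1 = g1'" using dvd_lt_eq[of n g1 g1'] p by blast
  have "int 7 dvd int g2 - int g2'"
    by (rule dvd_comb[OF vtx_dvd2[of as j g2 n ks d g1] vtx_dvd2[of as j g2' n ks d' g1']])
       (simp add: xx dd[symmetric] algebra_simps)
  then have gg2: "g2 = g2'" using dvd_lt_eq[of 7 g2 g2'] p by simp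
  show ?thesis using dd gg1 gg2 by simp
qed


lemma main:
  fixes ks as :: "nat list" and i n :: nat
  assumes odd: "odd n"
  and la: "length as = 7" and ab: "\<forall>j<7. as!j < 7"
  and idx: "\<forall>(j,l)\<in>set (D_arcs i). j<7 \<and> l<7"
  and coef: "\<forall>(j,l)\<in>set (D_arcs i). int(ks!l) - int(ks!j) \<in> {1,-1,2,-2}"
  and inj: "inj_on (\<lambda>(j,l). (int(as!l) - int(as!j)) mod 7) (set (D_arcs i))"
  and card: "card (set (D_arcs i)) = 7"
  and dist: "\<forall>p<7. \<forall>q<7. p \<noteq> q \<longrightarrow> as!p = as!q \<longrightarrow> int(ks!p) - int(ks!q) \<in> {1,-1,2,-2}"
  shows "\<exists>S. is_decomposition (D_type i) (Kstar_multi7 n) S"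
proof -
  let ?A = "set (D_arcs i)"
  let ?E = "\<lambda>(j,l). (int(as!l) - int(as!j)) mod 7"
  let ?V = "{0..<n} \<times> {0..<(7::nat)}"
  have n0: "n > 0" using odd by (cases n) auto
  define S where "S = {blk i n ks as d g1 g2 | d g1 g2. 0<d \<and> d<n \<and> g1<n \<and> g2<7}"
  have surjE: "?E ` ?A = {0..<7}"
  proof (rule card_subset_eq)
    show "finite {0..<7::int}" by simp
    show "?E ` ?A \<subseteq> {0..<7}" by auto
    show "card (?E ` ?A) = card {0..<7::int}" using card_image[OF inj] card by simp
  qed
  have vtx_mem: "\<And>d g1 g2 j. vtx n ks as d g1 g2 j \<in> ?V" using n0 by (simp add: vtx_def)
  have vf: "\<And>d g1 g2 j. fst (vtx n ks as d g1 g2 j) < n" using n0 by (simp add: vtx_def)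
  have vs7: "\<And>d g1 g2 j. snd (vtx n ks as d g1 g2 j) < 7" by (simp add: vtx_def)
  have blk_ok: "subdigraph (blk i n ks as d g1 g2) (Kstar_multi7 n) \<and> digraph_iso (D_type i) (blk i n ks as d g1 g2)"
    if d: "0<d" "d<n" for d g1 g2
  proof -
    let ?vs = "map (vtx n ks as d g1 g2) [0..<7]"
    have dvs: "distinct ?vs"
      unfolding distinct_conv_nth
    proof (intro allI impI)
      fix p q assume "p < length ?vs" "q < length ?vs" "p \<noteq> q"
      then have pq: "p<7" "q<7" "p\<noteq>q" by auto
      show "?vs!p \<noteq> ?vs!q"
      proof (cases "as!p = as!q")
        case True
        then have "int(ks!p) - int(ks!q) \<in> {1,-1,2,-2}" using dist pq by blast
        then have "(ks!p*d+g1) mod n \<noteq> (ks!q*d+g1) mod n" using fst_ne[OF odd d] by blast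
        then show ?thesis using pq by (simp add: vtx_def)
      next
        case False
        have "(as!p + g2) mod 7 \<noteq> (as!q+g2) mod 7"
        proof
          assume "(as!p + g2) mod 7 = (as!q+g2) mod 7"
          then have "[as!p + g2 = as!q + g2] (mod 7)" by (simp add: cong_def)
          then have "[as!p = as!q] (mod 7)" by (simp add: cong_add_rcancel_nat)
          then show False using False ab pq by (simp add: cong_def)
        qed
        then show ?thesis using pq by (simp add: vtx_def)
      qed
    qed
    have sub: "subdigraph (blk i n ks as d g1 g2) (Kstar_multi7 n)"
      unfolding subdigraph_def Kstar_fst blk_fst
    proof (intro conjI)
      show "vtx n ks as d g1 g2 ` {0..<7} \<subseteq> ?V" by (intro image_subsetI vtx_mem)
      show "snd (blk i n ks as d g1 g2) \<subseteq> snd (Kstar_multi7 n)"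
      proof
        fix a assume a: "a \<in> snd (blk i n ks as d g1 g2)"
        obtain x y where xy: "a = (x,y)" by (cases a)
        obtain j l where jl: "(j,l) \<in> ?A" "x = vtx n ks as d g1 g2 j" "y = vtx n ks as d g1 g2 l"
          using a xy blk_snd[OF idx] by blast
        have "int(ks!l) - int(ks!j) \<in> {1,-1,2,-2}" using coef jl(1) by auto
        then have "int(ks!j) - int(ks!l) \<in> {1,-1,2,-2}" by auto
        then have "(ks!j*d+g1) mod n \<noteq> (ks!l*d+g1) mod n" using fst_ne[OF odd d] by blast
        then show "a \<in> snd (Kstar_multi7 n)"
          unfolding xy Kstar_snd using jl vtx_mem by (simp add: vtx_def)
      qed
      show "snd (blk i n ks as d g1 g2) \<subseteq> vtx n ks as d g1 g2 ` {0..<7} \<times> vtx n ks as d g1 g2 ` {0..<7}"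
      proof
        fix a assume a: "a \<in> snd (blk i n ks as d g1 g2)"
        obtain x y where xy: "a = (x,y)" by (cases a)
        obtain j l where jl: "(j,l) \<in> ?A" "x = vtx n ks as d g1 g2 j" "y = vtx n ks as d g1 g2 l"
          using a xy blk_snd[OF idx] by blast
        show "a \<in> vtx n ks as d g1 g2 ` {0..<7} \<times> vtx n ks as d g1 g2 ` {0..<7}"
          using jl idx xy by auto
      qed
    qed
    have iso: "digraph_iso (D_type i) (blk i n ks as d g1 g2)"
      unfolding blk_def by (rule iso_D_on[OF dvs _ idx]) simp
    show ?thesis using sub iso by blast
  qed
  have cover: "\<exists>!H. H \<in> S \<and> a \<in> snd H" if a: "a \<in> snd (Kstar_multi7 n)" for a
  proof -
    obtain u1 u2 v1 v2 where auv: "a = ((u1,u2),(v1,v2))" by (metis prod.exhaust)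
    have r: "u1<n" "u2<7" "v1<n" "v2<7" "u1\<noteq>v1" using a unfolding auv Kstar_snd by auto
    have "(int v2 - int u2) mod 7 \<in> ?E ` ?A" using surjE by simp
    then obtain j l where jl: "(j,l) \<in> ?A" "(int(as!l) - int(as!j)) mod 7 = (int v2 - int u2) mod 7"
      by auto
    define c where "c = int(ks!l) - int(ks!j)"
    have c: "c \<in> {1,-1,2,-2}" using coef jl(1) by (auto simp: c_def)
    obtain d where d: "d<n" "int n dvd c * int d - (int v1 - int u1)"
      using coefc_surj[OF odd c] by blast
    have d0: "d \<noteq> 0"
    proof
      assume "d = 0"
      then have "int n dvd int v1 - int u1" using d(2) by (simp add: dvd_diff_commute)
      then have "v1 = u1" using dvd_lt_eq[of n v1 u1] r by blast
      then show False using r by simp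
    qed
    define g1 where "g1 = nat ((int u1 - int(ks!j) * int d) mod int n)"
    define g2 where "g2 = nat ((int u2 - int(as!j)) mod 7)"
    have ig1: "int g1 = (int u1 - int(ks!j) * int d) mod int n" using n0 by (simp add: g1_def)
    have ig2: "int g2 = (int u2 - int(as!j)) mod 7" by (simp add: g2_def)
    have "(int u1 - int(ks!j) * int d) mod int n < int n" using n0 by simp
    then have g1: "g1 < n" using ig1 by linarith
    have g2: "g2 < 7" using ig2 by linarith
    have h1: "int n dvd int g1 - (int u1 - int(ks!j) * int d)"
      unfolding ig1 using dvd_minus_mod[of "int n" "int u1 - int(ks!j) * int d"] dvd_diff_commute by blast
    have h2: "int 7 dvd int g2 - (int u2 - int(as!j))"
    proof -
      have "(7::int) dvd (int u2 - int(as!j)) mod 7 - (int u2 - int(as!j))"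
        using dvd_minus_mod[of 7 "int u2 - int(as!j)"] dvd_diff_commute by blast
      then show ?thesis unfolding ig2 by simp
    qed
    have h3: "int 7 dvd (int(as!l) - int(as!j)) - (int v2 - int u2)"
      using jl(2) by (simp add: mod_eq_dvd_iff)
    let ?w = "vtx n ks as d g1 g2"
    have w1: "?w j = (u1,u2)"
    proof -
      have a1: "int n dvd int (fst (?w j)) - int u1"
        by (rule dvd_comb[OF h1 vtx_dvd1[of n ks j d g1 as g2]]) (simp add: algebra_simps)
      have b1: "fst (?w j) = u1" by (rule dvd_lt_eq[OF a1 vf r(1)])
      have a2: "int 7 dvd int (snd (?w j)) - int u2"
        by (rule dvd_comb[OF h2 vtx_dvd2[of as j g2 n ks d g1]]) (simp add: algebra_simps)
      have b2: "snd (?w j) = u2" by (rule dvd_lt_eq[OF a2 vs7 r(2)])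
      show ?thesis using b1 b2 by (simp add: prod_eq_iff)
    qed
    have w2: "?w l = (v1,v2)"
    proof -
      have "int n dvd (int g1 - (int u1 - int(ks!j) * int d)) + (c * int d - (int v1 - int u1))"
        using h1 d(2) by (rule dvd_add)
      then have a1: "int n dvd int (fst (?w l)) - int v1"
        by (rule dvd_comb[OF _ vtx_dvd1[of n ks l d g1 as g2]]) (simp add: c_def algebra_simps)
      have b1: "fst (?w l) = v1" by (rule dvd_lt_eq[OF a1 vf r(3)])
      have "int 7 dvd (int g2 - (int u2 - int(as!j))) + ((int(as!l) - int(as!j)) - (int v2 - int u2))"
        using h2 h3 by (rule dvd_add)
      then have a2: "int 7 dvd int (snd (?w l)) - int v2"
        by (rule dvd_comb[OF _ vtx_dvd2[of as l g2 n ks d g1]]) (simp add: algebra_simps)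
      have b2: "snd (?w l) = v2" by (rule dvd_lt_eq[OF a2 vs7 r(4)])
      show ?thesis using b1 b2 by (simp add: prod_eq_iff)
    qed
    show ?thesis
    proof (rule ex_ex1I)
      show "\<exists>H. H \<in> S \<and> a \<in> snd H"
      proof (intro exI conjI)
        show "blk i n ks as d g1 g2 \<in> S" unfolding S_def using d d0 g1 g2 by blast
        show "a \<in> snd (blk i n ks as d g1 g2)"
          unfolding auv blk_snd[OF idx] using jl(1) w1[symmetric] w2[symmetric] by blast
      qed
    next
      fix H H' assume H: "H \<in> S \<and> a \<in> snd H" and H': "H' \<in> S \<and> a \<in> snd H'"
      obtain e h1 h2 where e: "H = blk i n ks as e h1 h2" "e<n" "h1<n" "h2<7"
        using H unfolding S_def by blast
      obtain e' h1' h2' where e': "H' = blk i n ks as e' h1' h2'" "e'<n" "h1'<n" "h2'<7"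
        using H' unfolding S_def by blast
      have m1: "((u1,u2),(v1,v2)) \<in> snd (blk i n ks as e h1 h2)" using H e(1) auv by simp
      have m2: "((u1,u2),(v1,v2)) \<in> snd (blk i n ks as e' h1' h2')" using H' e'(1) auv by simp
      show "H = H'" unfolding e(1) e'(1)
        by (rule blk_unique[OF odd idx coef inj e(2-4) e'(2-4) m1 m2])
    qed
  qed
  have P1: "\<forall>H\<in>S. subdigraph H (Kstar_multi7 n) \<and> digraph_iso (D_type i) H"
  proof
    fix H assume "H \<in> S"
    then obtain d g1 g2 where "H = blk i n ks as d g1 g2" "0<d" "d<n" unfolding S_def by blast
    then show "subdigraph H (Kstar_multi7 n) \<and> digraph_iso (D_type i) H" using blk_ok by blast
  qed
  have P2: "\<forall>a\<in>snd (Kstar_multi7 n). \<exists>!H. H \<in> S \<and> a \<in> snd H" using cover by blast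
  have "is_decomposition (D_type i) (Kstar_multi7 n) S"
    unfolding is_decomposition_def using P1 P2 by blast
  then show ?thesis by blast
qed


lemma case1:
  assumes "odd n"
  shows "\<exists>S. is_decomposition (D_type 1) (Kstar_multi7 n) S"
proof (rule main[where ks="[0,1,2,1,2,3,2]::nat list" and as="[0, 0, 1, 3, 0, 3, 2]::nat list"])
  have dk: "D_arcs 1 = D_arcs (Suc 0)" by (simp add: numeral_eq_Suc)
  show "odd n" by (rule assms)
  show "length ([0, 0, 1, 3, 0, 3, 2]::nat list) = 7" by simp
  show "\<forall>j<7. ([0, 0, 1, 3, 0, 3, 2]::nat list) ! j < 7" by (simp add: less_Suc_eq numeral_eq_Suc)
  show "\<forall>(j,l)\<in>set (D_arcs 1). j<7 \<and> l<7" unfolding dk by simp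
  show "\<forall>(j,l)\<in>set (D_arcs 1). int(([0,1,2,1,2,3,2]::nat list)!l) - int(([0,1,2,1,2,3,2]::nat list)!j) \<in> {1,-1,2,-2}" unfolding dk by simp
  show "inj_on (\<lambda>(j,l). (int(([0, 0, 1, 3, 0, 3, 2]::nat list)!l) - int(([0, 0, 1, 3, 0, 3, 2]::nat list)!j)) mod 7) (set (D_arcs 1))" unfolding dk by (simp add: inj_on_def)
  show "card (set (D_arcs 1)) = 7" unfolding dk by simp
  show "\<forall>p<7. \<forall>q<7. p \<noteq> q \<longrightarrow> ([0, 0, 1, 3, 0, 3, 2]::nat list)!p = ([0, 0, 1, 3, 0, 3, 2]::nat list)!q \<longrightarrow> int(([0,1,2,1,2,3,2]::nat list)!p) - int(([0,1,2,1,2,3,2]::nat list)!q) \<in> {1,-1,2,-2}"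
    by (simp add: less_Suc_eq numeral_eq_Suc)
qed

lemma case2:
  assumes "odd n"
  shows "\<exists>S. is_decomposition (D_type 2) (Kstar_multi7 n) S"
proof (rule main[where ks="[0,1,2,1,2,3,2]::nat list" and as="[0, 1, 0, 0, 2, 5, 3]::nat list"])
  have dk: "D_arcs 2 = D_arcs (Suc (Suc 0))" by (simp add: numeral_eq_Suc)
  show "odd n" by (rule assms)
  show "length ([0, 1, 0, 0, 2, 5, 3]::nat list) = 7" by simp
  show "\<forall>j<7. ([0, 1, 0, 0, 2, 5, 3]::nat list) ! j < 7" by (simp add: less_Suc_eq numeral_eq_Suc)
  show "\<forall>(j,l)\<in>set (D_arcs 2). j<7 \<and> l<7" unfolding dk by simp
  show "\<forall>(j,l)\<in>set (D_arcs 2). int(([0,1,2,1,2,3,2]::nat list)!l) - int(([0,1,2,1,2,3,2]::nat list)!j) \<in> {1,-1,2,-2}" unfolding dk by simp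
  show "inj_on (\<lambda>(j,l). (int(([0, 1, 0, 0, 2, 5, 3]::nat list)!l) - int(([0, 1, 0, 0, 2, 5, 3]::nat list)!j)) mod 7) (set (D_arcs 2))" unfolding dk by (simp add: inj_on_def)
  show "card (set (D_arcs 2)) = 7" unfolding dk by simp
  show "\<forall>p<7. \<forall>q<7. p \<noteq> q \<longrightarrow> ([0, 1, 0, 0, 2, 5, 3]::nat list)!p = ([0, 1, 0, 0, 2, 5, 3]::nat list)!q \<longrightarrow> int(([0,1,2,1,2,3,2]::nat list)!p) - int(([0,1,2,1,2,3,2]::nat list)!q) \<in> {1,-1,2,-2}"
    by (simp add: less_Suc_eq numeral_eq_Suc)
qed

lemma case3:
  assumes "odd n"
  shows "\<exists>S. is_decomposition (D_type 3) (Kstar_multi7 n) S"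
proof (rule main[where ks="[0,1,2,1,2,3,2]::nat list" and as="[0, 1, 1, 0, 2, 5, 3]::nat list"])
  have dk: "D_arcs 3 = D_arcs (Suc (Suc (Suc 0)))" by (simp add: numeral_eq_Suc)
  show "odd n" by (rule assms)
  show "length ([0, 1, 1, 0, 2, 5, 3]::nat list) = 7" by simp
  show "\<forall>j<7. ([0, 1, 1, 0, 2, 5, 3]::nat list) ! j < 7" by (simp add: less_Suc_eq numeral_eq_Suc)
  show "\<forall>(j,l)\<in>set (D_arcs 3). j<7 \<and> l<7" unfolding dk by simp
  show "\<forall>(j,l)\<in>set (D_arcs 3). int(([0,1,2,1,2,3,2]::nat list)!l) - int(([0,1,2,1,2,3,2]::nat list)!j) \<in> {1,-1,2,-2}" unfolding dk by simp
  show "inj_on (\<lambda>(j,l). (int(([0, 1, 1, 0, 2, 5, 3]::nat list)!l) - int(([0, 1, 1, 0, 2, 5, 3]::nat list)!j)) mod 7) (set (D_arcs 3))" unfolding dk by (simp add: inj_on_def)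
  show "card (set (D_arcs 3)) = 7" unfolding dk by simp
  show "\<forall>p<7. \<forall>q<7. p \<noteq> q \<longrightarrow> ([0, 1, 1, 0, 2, 5, 3]::nat list)!p = ([0, 1, 1, 0, 2, 5, 3]::nat list)!q \<longrightarrow> int(([0,1,2,1,2,3,2]::nat list)!p) - int(([0,1,2,1,2,3,2]::nat list)!q) \<in> {1,-1,2,-2}"
    by (simp add: less_Suc_eq numeral_eq_Suc)
qed

lemma case4:
  assumes "odd n"
  shows "\<exists>S. is_decomposition (D_type 4) (Kstar_multi7 n) S"
proof (rule main[where ks="[0,1,2,1,2,3,2]::nat list" and as="[0, 1, 1, 3, 2, 5, 3]::nat list"])
  have dk: "D_arcs 4 = D_arcs (Suc (Suc (Suc (Suc 0))))" by (simp add: numeral_eq_Suc)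
  show "odd n" by (rule assms)
  show "length ([0, 1, 1, 3, 2, 5, 3]::nat list) = 7" by simp
  show "\<forall>j<7. ([0, 1, 1, 3, 2, 5, 3]::nat list) ! j < 7" by (simp add: less_Suc_eq numeral_eq_Suc)
  show "\<forall>(j,l)\<in>set (D_arcs 4). j<7 \<and> l<7" unfolding dk by simp
  show "\<forall>(j,l)\<in>set (D_arcs 4). int(([0,1,2,1,2,3,2]::nat list)!l) - int(([0,1,2,1,2,3,2]::nat list)!j) \<in> {1,-1,2,-2}" unfolding dk by simp
  show "inj_on (\<lambda>(j,l). (int(([0, 1, 1, 3, 2, 5, 3]::nat list)!l) - int(([0, 1, 1, 3, 2, 5, 3]::nat list)!j)) mod 7) (set (D_arcs 4))" unfolding dk by (simp add: inj_on_def)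
  show "card (set (D_arcs 4)) = 7" unfolding dk by simp
  show "\<forall>p<7. \<forall>q<7. p \<noteq> q \<longrightarrow> ([0, 1, 1, 3, 2, 5, 3]::nat list)!p = ([0, 1, 1, 3, 2, 5, 3]::nat list)!q \<longrightarrow> int(([0,1,2,1,2,3,2]::nat list)!p) - int(([0,1,2,1,2,3,2]::nat list)!q) \<in> {1,-1,2,-2}"
    by (simp add: less_Suc_eq numeral_eq_Suc)
qed

lemma case5:
  assumes "odd n"
  shows "\<exists>S. is_decomposition (D_type 5) (Kstar_multi7 n) S"
proof (rule main[where ks="[0,1,2,1,2,3,2]::nat list" and as="[0, 1, 0, 0, 2, 5, 3]::nat list"])
  have dk: "D_arcs 5 = D_arcs (Suc (Suc (Suc (Suc (Suc 0)))))" by (simp add: numeral_eq_Suc)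
  show "odd n" by (rule assms)
  show "length ([0, 1, 0, 0, 2, 5, 3]::nat list) = 7" by simp
  show "\<forall>j<7. ([0, 1, 0, 0, 2, 5, 3]::nat list) ! j < 7" by (simp add: less_Suc_eq numeral_eq_Suc)
  show "\<forall>(j,l)\<in>set (D_arcs 5). j<7 \<and> l<7" unfolding dk by simp
  show "\<forall>(j,l)\<in>set (D_arcs 5). int(([0,1,2,1,2,3,2]::nat list)!l) - int(([0,1,2,1,2,3,2]::nat list)!j) \<in> {1,-1,2,-2}" unfolding dk by simp
  show "inj_on (\<lambda>(j,l). (int(([0, 1, 0, 0, 2, 5, 3]::nat list)!l) - int(([0, 1, 0, 0, 2, 5, 3]::nat list)!j)) mod 7) (set (D_arcs 5))" unfolding dk by (simp add: inj_on_def)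
  show "card (set (D_arcs 5)) = 7" unfolding dk by simp
  show "\<forall>p<7. \<forall>q<7. p \<noteq> q \<longrightarrow> ([0, 1, 0, 0, 2, 5, 3]::nat list)!p = ([0, 1, 0, 0, 2, 5, 3]::nat list)!q \<longrightarrow> int(([0,1,2,1,2,3,2]::nat list)!p) - int(([0,1,2,1,2,3,2]::nat list)!q) \<in> {1,-1,2,-2}"
    by (simp add: less_Suc_eq numeral_eq_Suc)
qed

lemma case6:
  assumes "odd n"
  shows "\<exists>S. is_decomposition (D_type 6) (Kstar_multi7 n) S"
proof (rule main[where ks="[0,1,2,1,2,3,2]::nat list" and as="[0, 0, 1, 3, 0, 6, 2]::nat list"])
  have dk: "D_arcs 6 = D_arcs (Suc (Suc (Suc (Suc (Suc (Suc 0))))))" by (simp add: numeral_eq_Suc)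
  show "odd n" by (rule assms)
  show "length ([0, 0, 1, 3, 0, 6, 2]::nat list) = 7" by simp
  show "\<forall>j<7. ([0, 0, 1, 3, 0, 6, 2]::nat list) ! j < 7" by (simp add: less_Suc_eq numeral_eq_Suc)
  show "\<forall>(j,l)\<in>set (D_arcs 6). j<7 \<and> l<7" unfolding dk by simp
  show "\<forall>(j,l)\<in>set (D_arcs 6). int(([0,1,2,1,2,3,2]::nat list)!l) - int(([0,1,2,1,2,3,2]::nat list)!j) \<in> {1,-1,2,-2}" unfolding dk by simp
  show "inj_on (\<lambda>(j,l). (int(([0, 0, 1, 3, 0, 6, 2]::nat list)!l) - int(([0, 0, 1, 3, 0, 6, 2]::nat list)!j)) mod 7) (set (D_arcs 6))" unfolding dk by (simp add: inj_on_def)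
  show "card (set (D_arcs 6)) = 7" unfolding dk by simp
  show "\<forall>p<7. \<forall>q<7. p \<noteq> q \<longrightarrow> ([0, 0, 1, 3, 0, 6, 2]::nat list)!p = ([0, 0, 1, 3, 0, 6, 2]::nat list)!q \<longrightarrow> int(([0,1,2,1,2,3,2]::nat list)!p) - int(([0,1,2,1,2,3,2]::nat list)!q) \<in> {1,-1,2,-2}"
    by (simp add: less_Suc_eq numeral_eq_Suc)
qed

lemma case7:
  assumes "odd n"
  shows "\<exists>S. is_decomposition (D_type 7) (Kstar_multi7 n) S"
proof (rule main[where ks="[0,1,2,1,2,3,2]::nat list" and as="[0, 0, 1, 3, 0, 6, 4]::nat list"])
  have dk: "D_arcs 7 = D_arcs (Suc (Suc (Suc (Suc (Suc (Suc (Suc 0)))))))" by (simp add: numeral_eq_Suc)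
  show "odd n" by (rule assms)
  show "length ([0, 0, 1, 3, 0, 6, 4]::nat list) = 7" by simp
  show "\<forall>j<7. ([0, 0, 1, 3, 0, 6, 4]::nat list) ! j < 7" by (simp add: less_Suc_eq numeral_eq_Suc)
  show "\<forall>(j,l)\<in>set (D_arcs 7). j<7 \<and> l<7" unfolding dk by simp
  show "\<forall>(j,l)\<in>set (D_arcs 7). int(([0,1,2,1,2,3,2]::nat list)!l) - int(([0,1,2,1,2,3,2]::nat list)!j) \<in> {1,-1,2,-2}" unfolding dk by simp
  show "inj_on (\<lambda>(j,l). (int(([0, 0, 1, 3, 0, 6, 4]::nat list)!l) - int(([0, 0, 1, 3, 0, 6, 4]::nat list)!j)) mod 7) (set (D_arcs 7))" unfolding dk by (simp add: inj_on_def)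
  show "card (set (D_arcs 7)) = 7" unfolding dk by simp
  show "\<forall>p<7. \<forall>q<7. p \<noteq> q \<longrightarrow> ([0, 0, 1, 3, 0, 6, 4]::nat list)!p = ([0, 0, 1, 3, 0, 6, 4]::nat list)!q \<longrightarrow> int(([0,1,2,1,2,3,2]::nat list)!p) - int(([0,1,2,1,2,3,2]::nat list)!q) \<in> {1,-1,2,-2}"
    by (simp add: less_Suc_eq numeral_eq_Suc)
qed

theorem corollary1p7:
  fixes n i :: nat
  assumes "odd n" and "n \<ge> 3" and "i \<in> {1..7}"
  shows "\<exists>S. is_decomposition (D_type i) (Kstar_multi7 n) S"
proof -
  have "i = 1 \<or> i = 2 \<or> i = 3 \<or> i = 4 \<or> i = 5 \<or> i = 6 \<or> i = 7" using assms(3) by auto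
  then show ?thesis using case1 case2 case3 case4 case5 case6 case7 assms(1) by blast
qed

end
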